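(* Let $d,n\ge 1$, let $\boldsymbol{a}_1,\ldots,\boldsymbol{a}_n\in\mathbf{R}^d$, let $w_1,\ldots,w_n>0$, fix $\varepsilon>0$ and $0<p<1$. Define $\Phi(\boldsymbol{x})=\sum_{j=1}^n w_j\,(\lVert\boldsymbol{x}-\boldsymbol{a}_j\rVert^2+\varepsilon)^{p/2}$. Let $\boldsymbol{x}^{(0)}\in\mathbf{R}^d$ and define, for $t\ge 0$, $$\mu_j^{(t)}=w_j\,(\lVert\boldsymbol{x}^{(t)}-\boldsymbol{a}_j\rVert^2+\varepsilon)^{p/2-1},\qquad \boldsymbol{x}^{(t+1)}=\frac{\sum_j\mu_j^{(t)}\boldsymbol{a}_j}{\sum_j\mu_j^{(t)}}.$$ Assume that $(\boldsymbol{x}^{(t)})$ converges to a local minimizer $\boldsymbol{x}^\star$ of $\Phi$ and that the Hessian $\Phi''(\boldsymbol{x}^\star)$ is positive definite. Then $(\Phi(\boldsymbol{x}^{(t)}))$ converges linearly to $\Phi(\boldsymbol{x}^\star)$, i.e. there exist $\nu<1$ and $T\ge 0$ such that $\Phi(\boldsymbol{x}^{(t+1)})-\Phi(\boldsymbol{x}^\star)\le\nu\big(\Phi(\boldsymbol{x}^{(t)})-\Phi(\boldsymbol{x}^\star)\big)$ for all $t\ge T$.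
   Context: $\lVert\cdot\rVert$ is the Euclidean norm on $\mathbf{R}^d$; $\Phi''$ denotes the Hessian matrix of the smooth function $\Phi$. *)

theory Defs
  imports "HOL-Analysis.Analysis"
begin

definition local_minimizer :: "('a::real_normed_vector \<Rightarrow> real) \<Rightarrow> 'a \<Rightarrow> bool" where
  "local_minimizer f x \<longleftrightarrow> (\<exists>\<delta>>0. \<forall>y. dist y x < \<delta> \<longrightarrow> f x \<le> f y)"

text \<open>Here g is the
  gradient of f (f differentiable everywhere, with derivative h \<mapsto> g y \<bullet> h), and H is
  the Frechet derivative of g at x, i.e. the Hessian f''(x) as a linear map.\<close>
definition hessian_pos_def :: "('a::euclidean_space \<Rightarrow> real) \<Rightarrow> 'a \<Rightarrow> bool" where
  "hessian_pos_def f x \<longleftrightarrow>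
     (\<exists>g H. (\<forall>y. (f has_derivative (\<lambda>h. g y \<bullet> h)) (at y)) \<and>
            (g has_derivative H) (at x) \<and>
            (\<forall>v. v \<noteq> 0 \<longrightarrow> v \<bullet> H v > 0))"

end

theory Submission
  imports Defs
begin

lemma tangent:
  fixes u u0 q :: real
  assumes "0<u" "0<u0" "0<q" "q<1"
  shows "u powr q \<le> u0 powr q + q * u0 powr (q-1) * (u - u0)"
proof -
  have Y: "u powr q * u0 powr (1-q) \<le> q*u + (1-q)*u0"
    using Youngs_inequality_0[of q "1-q" u u0] assms by simp
  have c: "u0 powr (1-q) * u0 powr (q-1) = 1"
    using assms by (simp add: powr_add[symmetric])
  have d: "u0 powr (q-1) * u0 = u0 powr q"
    using powr_add[of u0 "q-1" 1] assms by simp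
  have pos: "u0 powr (q-1) > 0" using assms by simp
  have "u powr q = (u powr q * u0 powr (1-q)) * u0 powr (q-1)"
    using c by (simp add: mult.assoc)
  also have "\<dots> \<le> (q*u + (1-q)*u0) * u0 powr (q-1)"
    using Y pos by (simp add: mult_right_mono)
  also have "\<dots> = u0 powr q + q * u0 powr (q-1) * (u - u0)"
    using d by (simp add: algebra_simps)
  finally show ?thesis .
qed

lemma term_deriv:
  fixes a :: "'a::euclidean_space" and \<epsilon> q :: real
  assumes "\<epsilon> > 0"
  shows "((\<lambda>y. ((norm (y - a))\<^sup>2 + \<epsilon>) powr q) has_derivative
     (\<lambda>h. (2 * q * ((norm (y - a))\<^sup>2 + \<epsilon>) powr (q - 1)) * ((y - a) \<bullet> h))) (at y)"
proof -
  have e: "\<And>z. (norm (z - a))\<^sup>2 = (z - a) \<bullet> (z - a)" by (simp add: power2_norm_eq_inner)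
  have pos: "0 < (y - a) \<bullet> (y - a) + \<epsilon>" using assms by (simp add: add_nonneg_pos)
  have "((\<lambda>y. ((y - a) \<bullet> (y - a) + \<epsilon>) powr q) has_derivative
     (\<lambda>h. (2 * q * ((y - a) \<bullet> (y - a) + \<epsilon>) powr (q - 1)) * ((y - a) \<bullet> h))) (at y)"
  proof (rule has_derivative_eq_rhs)
    show "((\<lambda>y. ((y - a) \<bullet> (y - a) + \<epsilon>) powr q) has_derivative
      (\<lambda>h. ((y - a) \<bullet> (y - a) + \<epsilon>) powr q * (0 * ln ((y - a) \<bullet> (y - a) + \<epsilon>) +
         ((y - a) \<bullet> h + h \<bullet> (y - a) + 0) * q / ((y - a) \<bullet> (y - a) + \<epsilon>)))) (at y)"
      by (rule derivative_eq_intros refl pos | simp)+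
    show "(\<lambda>h. ((y - a) \<bullet> (y - a) + \<epsilon>) powr q * (0 * ln ((y - a) \<bullet> (y - a) + \<epsilon>) +
         ((y - a) \<bullet> h + h \<bullet> (y - a) + 0) * q / ((y - a) \<bullet> (y - a) + \<epsilon>))) =
      (\<lambda>h. (2 * q * ((y - a) \<bullet> (y - a) + \<epsilon>) powr (q - 1)) * ((y - a) \<bullet> h))"
      using pos by (auto simp: powr_diff inner_commute field_simps)
  qed
  then show ?thesis unfolding e .
qed

theorem proposition7:
  fixes n :: nat and a :: "nat \<Rightarrow> 'a::euclidean_space" and w :: "nat \<Rightarrow> real"
    and \<epsilon> p :: real and \<Phi> :: "'a \<Rightarrow> real" and x :: "nat \<Rightarrow> 'a" and xs :: 'a
  assumes "n \<ge> 1"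
    and "\<And>j. j < n \<Longrightarrow> w j > 0"
    and "\<epsilon> > 0" and "0 < p" and "p < 1"
    and \<Phi>_def: "\<And>y. \<Phi> y = (\<Sum>j<n. w j * ((norm (y - a j))\<^sup>2 + \<epsilon>) powr (p / 2))"
    and step: "\<And>t. x (Suc t) =
       (\<Sum>j<n. (w j * ((norm (x t - a j))\<^sup>2 + \<epsilon>) powr (p / 2 - 1)) *\<^sub>R a j) /\<^sub>R
       (\<Sum>j<n. w j * ((norm (x t - a j))\<^sup>2 + \<epsilon>) powr (p / 2 - 1))"
    and "x \<longlonglongrightarrow> xs"
    and "local_minimizer \<Phi> xs"
    and "hessian_pos_def \<Phi> xs"
  shows "\<exists>\<nu> < 1. \<exists>T. \<forall>t\<ge>T. \<Phi> (x (Suc t)) - \<Phi> xs \<le> \<nu> * (\<Phi> (x t) - \<Phi> xs)"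
proof -
  note wpos = assms(2)
  have eps: "\<epsilon> > 0" and p0: "0 < p" and p1: "p < 1" using assms by auto
  define \<mu> where "\<mu> y j = w j * ((norm (y - a j))\<^sup>2 + \<epsilon>) powr (p/2 - 1)" for y j
  define M where "M y = (\<Sum>j<n. \<mu> y j)" for y
  define G where "G y = (\<Sum>j<n. (p * \<mu> y j) *\<^sub>R (y - a j))" for y
  define Mx where "Mx = (\<Sum>j<n. w j * \<epsilon> powr (p/2 - 1))"
  have \<mu>pos: "\<And>y j. j < n \<Longrightarrow> \<mu> y j > 0"
  proof -
    fix y j assume j: "j < n"
    have "(norm (y - a j))\<^sup>2 + \<epsilon> > 0" using eps by (simp add: add_nonneg_pos)
    then show "\<mu> y j > 0" unfolding \<mu>_def using wpos[OF j] by simp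
  qed
  have Mpos: "\<And>y. M y > 0" unfolding M_def using \<mu>pos \<open>n \<ge> 1\<close>
    by (intro sum_pos) (auto simp: lessThan_empty_iff)
  have Mle: "\<And>y. M y \<le> Mx" unfolding M_def Mx_def \<mu>_def
    using wpos eps p1 by (intro sum_mono mult_left_mono powr_mono2') (auto simp: less_imp_le)
  have xstep: "\<And>t. (\<Sum>j<n. \<mu> (x t) j *\<^sub>R a j) = M (x t) *\<^sub>R x (Suc t)"
  proof -
    fix t
    have "M (x t) \<noteq> 0" using Mpos[of "x t"] by simp
    then show "(\<Sum>j<n. \<mu> (x t) j *\<^sub>R a j) = M (x t) *\<^sub>R x (Suc t)"
      using step[of t] unfolding \<mu>_def M_def by simp
  qed
  have Gform: "\<And>y. G y = p *\<^sub>R (M y *\<^sub>R y - (\<Sum>j<n. \<mu> y j *\<^sub>R a j))"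
    unfolding G_def M_def
    by (simp add: scaleR_diff_right scaleR_sum_left sum_subtractf scaleR_sum_right)
  have Gx: "\<And>t. G (x t) = (p * M (x t)) *\<^sub>R (x t - x (Suc t))"
    using Gform xstep by (simp add: scaleR_diff_right)
  have sq: "\<And>c z y. (\<Sum>j<n. c j * ((norm (z - a j))\<^sup>2 - (norm (y - a j))\<^sup>2)) =
      (\<Sum>j<n. c j) * ((norm z)\<^sup>2 - (norm y)\<^sup>2) - 2 * ((\<Sum>j<n. c j *\<^sub>R a j) \<bullet> (z - y))"
  proof -
    fix c :: "nat \<Rightarrow> real" and z y :: 'a
    have e: "\<And>j. (norm (z - a j))\<^sup>2 - (norm (y - a j))\<^sup>2 = ((norm z)\<^sup>2 - (norm y)\<^sup>2) - 2 * (a j \<bullet> (z - y))"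
      by (simp add: power2_norm_eq_inner inner_diff_left inner_diff_right inner_commute algebra_simps)
    have "(\<Sum>j<n. c j * ((norm (z - a j))\<^sup>2 - (norm (y - a j))\<^sup>2)) =
        (\<Sum>j<n. c j * ((norm z)\<^sup>2 - (norm y)\<^sup>2) - 2 * (c j * (a j \<bullet> (z - y))))"
      by (simp add: e right_diff_distrib mult.left_commute)
    also have "\<dots> = (\<Sum>j<n. c j) * ((norm z)\<^sup>2 - (norm y)\<^sup>2) - 2 * (\<Sum>j<n. c j * (a j \<bullet> (z - y)))"
      by (simp add: sum_subtractf sum_distrib_left sum_distrib_right)
    also have "(\<Sum>j<n. c j * (a j \<bullet> (z - y))) = (\<Sum>j<n. c j *\<^sub>R a j) \<bullet> (z - y)"
      by (simp add: inner_sum_left)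
    finally show "?thesis c z y" .
  qed
  have alg: "\<And>w A B C D e p::real. w*(A + p/2*B*((C+e)-(D+e))) = w*A + p/2*((w*B)*(C-D))"
    by algebra
  have maj: "\<And>y z. \<Phi> z \<le> \<Phi> y + p/2 * (\<Sum>j<n. \<mu> y j * ((norm (z - a j))\<^sup>2 - (norm (y - a j))\<^sup>2))"
  proof -
    fix y z
    have "\<And>j. j < n \<Longrightarrow> w j * ((norm (z - a j))\<^sup>2 + \<epsilon>) powr (p / 2) \<le>
        w j * ((norm (y - a j))\<^sup>2 + \<epsilon>) powr (p / 2) + p/2 * (\<mu> y j * ((norm (z - a j))\<^sup>2 - (norm (y - a j))\<^sup>2))"
    proof -
      fix j assume j: "j < n"
      have t: "((norm (z - a j))\<^sup>2 + \<epsilon>) powr (p / 2) \<le> ((norm (y - a j))\<^sup>2 + \<epsilon>) powr (p / 2)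
          + p/2 * ((norm (y - a j))\<^sup>2 + \<epsilon>) powr (p/2 - 1) * (((norm (z - a j))\<^sup>2 + \<epsilon>) - ((norm (y - a j))\<^sup>2 + \<epsilon>))"
        using eps p0 p1 by (intro tangent) (auto simp: add_nonneg_pos)
      have "w j * ((norm (z - a j))\<^sup>2 + \<epsilon>) powr (p / 2) \<le> w j * (((norm (y - a j))\<^sup>2 + \<epsilon>) powr (p / 2)
          + p/2 * ((norm (y - a j))\<^sup>2 + \<epsilon>) powr (p/2 - 1) * (((norm (z - a j))\<^sup>2 + \<epsilon>) - ((norm (y - a j))\<^sup>2 + \<epsilon>)))"
        using t wpos[OF j] by (intro mult_left_mono) auto
      moreover have "w j * (((norm (y - a j))\<^sup>2 + \<epsilon>) powr (p / 2)
          + p/2 * ((norm (y - a j))\<^sup>2 + \<epsilon>) powr (p/2 - 1) * (((norm (z - a j))\<^sup>2 + \<epsilon>) - ((norm (y - a j))\<^sup>2 + \<epsilon>)))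
          = w j * ((norm (y - a j))\<^sup>2 + \<epsilon>) powr (p / 2) + p/2 * (\<mu> y j * ((norm (z - a j))\<^sup>2 - (norm (y - a j))\<^sup>2))"
        unfolding \<mu>_def by (rule alg)
      ultimately show "?thesis j" by linarith
    qed
    then have "\<Phi> z \<le> (\<Sum>j<n. w j * ((norm (y - a j))\<^sup>2 + \<epsilon>) powr (p / 2) + p/2 * (\<mu> y j * ((norm (z - a j))\<^sup>2 - (norm (y - a j))\<^sup>2)))"
      unfolding \<Phi>_def by (intro sum_mono) auto
    then show "?thesis y z" by (simp add: \<Phi>_def sum.distrib sum_distrib_left)
  qed
  have deriv: "\<And>y. (\<Phi> has_derivative (\<lambda>h. G y \<bullet> h)) (at y)"
  proof -
    fix y
    have "((\<lambda>y. \<Sum>j<n. w j * ((norm (y - a j))\<^sup>2 + \<epsilon>) powr (p / 2)) has_derivative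
       (\<lambda>h. \<Sum>j<n. w j * ((2 * (p/2) * ((norm (y - a j))\<^sup>2 + \<epsilon>) powr (p/2 - 1)) * ((y - a j) \<bullet> h)))) (at y)"
      by (intro has_derivative_sum has_derivative_mult_right term_deriv eps)
    moreover have "(\<lambda>h. \<Sum>j<n. w j * ((2 * (p/2) * ((norm (y - a j))\<^sup>2 + \<epsilon>) powr (p/2 - 1)) * ((y - a j) \<bullet> h)))
       = (\<lambda>h. G y \<bullet> h)"
      unfolding G_def \<mu>_def by (auto simp: inner_sum_left intro!: sum.cong)
    moreover have "\<Phi> = (\<lambda>y. \<Sum>j<n. w j * ((norm (y - a j))\<^sup>2 + \<epsilon>) powr (p / 2))"
      using \<Phi>_def by auto
    ultimately show "?thesis y" by simp
  qed
  from assms(10) obtain g H where g: "\<forall>y. (\<Phi> has_derivative (\<lambda>h. g y \<bullet> h)) (at y)"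
    and gH: "(g has_derivative H) (at xs)" and Hpos: "\<forall>v. v \<noteq> 0 \<longrightarrow> v \<bullet> H v > 0"
    unfolding hessian_pos_def_def by blast
  have gG: "\<And>y. g y = G y"
  proof -
    fix y
    have "(\<lambda>h. g y \<bullet> h) = (\<lambda>h. G y \<bullet> h)" using has_derivative_unique g deriv by blast
    then have "g y \<bullet> (g y - G y) = G y \<bullet> (g y - G y)" by metis
    then have "(g y - G y) \<bullet> (g y - G y) = 0" by (simp add: inner_diff_left)
    then show "g y = G y" by simp
  qed
  have lin: "bounded_linear H" using gH has_derivative_bounded_linear by blast
  have "continuous_on (sphere (0::'a) 1) (\<lambda>v. v \<bullet> H v)"
    using linear_continuous_on[OF lin] by (intro continuous_on_inner continuous_on_id) auto
  then obtain u0 where u0: "u0 \<in> sphere (0::'a) 1" and u0min: "\<forall>v\<in>sphere 0 1. u0 \<bullet> H u0 \<le> v \<bullet> H v"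
    using continuous_attains_inf[of "sphere (0::'a) 1" "\<lambda>v. v \<bullet> H v"] by auto
  define lam where "lam = u0 \<bullet> H u0"
  have "u0 \<noteq> 0" using u0 by auto
  then have lpos: "lam > 0" unfolding lam_def using Hpos by auto
  have Hlow: "\<And>v. lam * norm v \<le> norm (H v)"
  proof -
    fix v :: 'a
    show "lam * norm v \<le> norm (H v)"
    proof (cases "v = 0")
      case True then show ?thesis using lin by (simp add: linear_simps)
    next
      case False
      define u where "u = v /\<^sub>R norm v"
      have us: "u \<in> sphere 0 1" using False unfolding u_def by simp
      have Hu: "H (v /\<^sub>R norm v) = H v /\<^sub>R norm v"
        using linear_cmul[OF bounded_linear.linear[OF lin]] by simp
      have "lam \<le> u \<bullet> H u" using u0min us unfolding lam_def by auto
      also have "\<dots> = (v \<bullet> H v) / (norm v)\<^sup>2" unfolding u_def Hu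
        by (simp add: power2_eq_square divide_inverse)
      finally have "lam * (norm v)\<^sup>2 \<le> v \<bullet> H v" using False by (simp add: field_simps)
      also have "\<dots> \<le> norm v * norm (H v)" by (rule norm_cauchy_schwarz)
      finally have "norm v * (lam * norm v) \<le> norm v * norm (H v)"
        by (simp add: power2_eq_square algebra_simps)
      then show ?thesis using False by simp
    qed
  qed
  have dlim: "(\<lambda>t. x t - x (Suc t)) \<longlonglongrightarrow> 0"
    using tendsto_diff[OF assms(8) LIMSEQ_Suc[OF assms(8)]] by simp
  have G0: "(\<lambda>t. G (x t)) \<longlonglongrightarrow> 0"
  proof (rule Lim_null_comparison)
    show "\<forall>\<^sub>F t in sequentially. norm (G (x t)) \<le> p * Mx * norm (x t - x (Suc t))"
    proof (rule always_eventually, rule allI)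
      fix t
      have "norm (G (x t)) = p * M (x t) * norm (x t - x (Suc t))"
        using Gx p0 Mpos[of "x t"] by simp
      also have "\<dots> \<le> p * Mx * norm (x t - x (Suc t))"
        using Mle p0 by (intro mult_right_mono mult_left_mono) auto
      finally show "norm (G (x t)) \<le> p * Mx * norm (x t - x (Suc t))" .
    qed
    show "(\<lambda>t. p * Mx * norm (x t - x (Suc t))) \<longlonglongrightarrow> 0"
      using tendsto_mult_right_zero[OF tendsto_norm_zero[OF dlim]] by simp
  qed
  have "(\<lambda>t. G (x t)) \<longlonglongrightarrow> G xs"
  proof -
    have "isCont g xs" using has_derivative_continuous[OF gH] by simp
    then have "(\<lambda>t. g (x t)) \<longlonglongrightarrow> g xs" using isCont_tendsto_compose assms(8) by blast
    then show ?thesis using gG by simp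
  qed
  then have Gxs: "G xs = 0" using G0 LIMSEQ_unique by blast
  have Sxs: "(\<Sum>j<n. \<mu> xs j *\<^sub>R a j) = M xs *\<^sub>R xs"
    using Gxs Gform[of xs] p0 by simp
  have upper: "\<And>z. \<Phi> z - \<Phi> xs \<le> p/2 * M xs * (norm (z - xs))\<^sup>2"
  proof -
    fix z
    have e: "(norm z)\<^sup>2 - (norm xs)\<^sup>2 - 2 * (xs \<bullet> (z - xs)) = (norm (z - xs))\<^sup>2"
      by (simp add: power2_norm_eq_inner inner_diff_left inner_diff_right inner_commute algebra_simps)
    have "(\<Sum>j<n. \<mu> xs j * ((norm (z - a j))\<^sup>2 - (norm (xs - a j))\<^sup>2)) = M xs * (norm (z - xs))\<^sup>2"
    proof -
      have "(\<Sum>j<n. \<mu> xs j * ((norm (z - a j))\<^sup>2 - (norm (xs - a j))\<^sup>2))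
          = M xs * ((norm z)\<^sup>2 - (norm xs)\<^sup>2) - 2 * ((M xs *\<^sub>R xs) \<bullet> (z - xs))"
        unfolding sq Sxs M_def[symmetric] ..
      also have "\<dots> = M xs * ((norm z)\<^sup>2 - (norm xs)\<^sup>2 - 2 * (xs \<bullet> (z - xs)))"
        by (simp add: algebra_simps)
      finally show ?thesis using e by simp
    qed
    then show "\<Phi> z - \<Phi> xs \<le> p/2 * M xs * (norm (z - xs))\<^sup>2" using maj[where y=xs and z=z] by simp
  qed
  have descent: "\<And>t. \<Phi> (x (Suc t)) \<le> \<Phi> (x t) - p/2 * M (x t) * (norm (x (Suc t) - x t))\<^sup>2"
  proof -
    fix t
    have e: "(norm (x (Suc t)))\<^sup>2 - (norm (x t))\<^sup>2 - 2 * (x (Suc t) \<bullet> (x (Suc t) - x t)) = - (norm (x (Suc t) - x t))\<^sup>2"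
      by (simp add: power2_norm_eq_inner inner_diff_left inner_diff_right inner_commute algebra_simps)
    have "(\<Sum>j<n. \<mu> (x t) j * ((norm (x (Suc t) - a j))\<^sup>2 - (norm (x t - a j))\<^sup>2)) = - M (x t) * (norm (x (Suc t) - x t))\<^sup>2"
    proof -
      have "(\<Sum>j<n. \<mu> (x t) j * ((norm (x (Suc t) - a j))\<^sup>2 - (norm (x t - a j))\<^sup>2))
          = M (x t) * ((norm (x (Suc t)))\<^sup>2 - (norm (x t))\<^sup>2) - 2 * ((M (x t) *\<^sub>R x (Suc t)) \<bullet> (x (Suc t) - x t))"
        unfolding sq xstep M_def[symmetric] ..
      also have "\<dots> = M (x t) * ((norm (x (Suc t)))\<^sup>2 - (norm (x t))\<^sup>2 - 2 * (x (Suc t) \<bullet> (x (Suc t) - x t)))"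
        by (simp add: algebra_simps)
      finally show ?thesis using e by simp
    qed
    then show "?thesis t" using maj[where y="x t" and z="x (Suc t)"] by simp
  qed
  obtain d where d: "d > 0" and dH: "\<forall>y. norm (y - xs) < d \<longrightarrow> norm (g y - g xs - H (y - xs)) \<le> lam/2 * norm (y - xs)"
    using gH lpos unfolding has_derivative_at_alt by (meson half_gt_zero)
  have Glow: "\<And>y. norm (y - xs) < d \<Longrightarrow> lam/2 * norm (y - xs) \<le> norm (G y)"
  proof -
    fix y assume y: "norm (y - xs) < d"
    have r: "norm (G y - H (y - xs)) \<le> lam/2 * norm (y - xs)" using dH y gG Gxs by auto
    have "norm (H (y - xs)) \<le> norm (G y) + norm (G y - H (y - xs))"
      by (metis add_diff_cancel_left' diff_add_cancel norm_diff_ineq norm_minus_commute add.commute le_diff_eq)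
    then show "lam/2 * norm (y - xs) \<le> norm (G y)" using Hlow[of "y - xs"] r by simp
  qed
  obtain T where T: "\<forall>t\<ge>T. norm (x t - xs) < d" using assms(8) d unfolding LIMSEQ_iff by blast
  have Mxs: "M xs > 0" using Mpos by blast
  have Mxp: "Mx > 0" using Mle[of xs] Mxs by simp
  define \<kappa> where "\<kappa> = lam\<^sup>2 / (4 * p\<^sup>2 * M xs * Mx)"
  have kpos: "\<kappa> > 0" unfolding \<kappa>_def using lpos p0 Mxs Mxp by simp
  have main: "\<forall>t\<ge>T. \<Phi> (x (Suc t)) - \<Phi> xs \<le> (1 - \<kappa>) * (\<Phi> (x t) - \<Phi> xs)"
  proof (intro allI impI)
    fix t assume tT: "t \<ge> T"
    define m where "m = M (x t)"
    define D where "D = norm (x (Suc t) - x t)"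
    define r where "r = norm (x t - xs)"
    define \<Delta> where "\<Delta> = \<Phi> (x t) - \<Phi> xs"
    have mpos: "m > 0" and mle: "m \<le> Mx" unfolding m_def using Mpos Mle by auto
    have GD: "norm (G (x t)) = p * m * D" unfolding m_def D_def
      using Gx p0 Mpos[of "x t"] by (simp add: norm_minus_commute)
    have h0: "lam/2 * r \<le> p * m * D" using Glow[of "x t"] T tT GD unfolding r_def by auto
    have h1: "(lam/2 * r)\<^sup>2 \<le> (p * m * D)\<^sup>2"
      using h0 lpos by (intro power_mono) (auto simp: r_def)
    have h2: "p/2 * m * D\<^sup>2 = (p * m * D)\<^sup>2 / (2 * p * m)"
      using p0 mpos by (simp add: field_simps power2_eq_square)
    have h3: "(p * m * D)\<^sup>2 / (2 * p * Mx) \<le> (p * m * D)\<^sup>2 / (2 * p * m)"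
      using p0 mpos mle by (intro divide_left_mono) auto
    have h4: "(lam/2 * r)\<^sup>2 / (2 * p * Mx) \<le> (p * m * D)\<^sup>2 / (2 * p * Mx)"
      using h1 p0 Mxp by (intro divide_right_mono) auto
    have h5: "\<kappa> * \<Delta> \<le> \<kappa> * (p/2 * M xs * r\<^sup>2)"
      using upper[of "x t"] kpos unfolding \<Delta>_def r_def by (intro mult_left_mono) auto
    have h6: "\<kappa> * (p/2 * M xs * r\<^sup>2) = (lam/2 * r)\<^sup>2 / (2 * p * Mx)"
      unfolding \<kappa>_def using p0 Mxs Mxp by (simp add: field_simps power2_eq_square)
    have "\<kappa> * \<Delta> \<le> p/2 * m * D\<^sup>2" using h2 h3 h4 h5 h6 by linarith
    moreover have "\<Phi> (x (Suc t)) \<le> \<Phi> (x t) - p/2 * m * D\<^sup>2"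
      using descent[of t] unfolding m_def D_def .
    ultimately show "\<Phi> (x (Suc t)) - \<Phi> xs \<le> (1 - \<kappa>) * (\<Phi> (x t) - \<Phi> xs)"
      unfolding \<Delta>_def by (simp add: algebra_simps)
  qed
  show ?thesis using main kpos by (intro exI[of _ "1 - \<kappa>"]) auto
qed

end
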